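(* $J=J^\epsilon\oplus J^\nu$ for some $\mathbb{F}_p[G]$-submodule $J^\nu$ of $J$, and the index $e$ vanishes on $J^\nu\cap J_{p-1}$. Moreover, for $x\in J_{p-1}$ with decomposition $x=x^\epsilon x^\nu$ ($x^\epsilon\in J^\epsilon$, $x^\nu\in J^\nu$), one has $e(x^\epsilon)=e(x)$.
   Context: $p$ odd prime. $K_0/F_0$ is a cyclic extension of degree $p$ of fields of characteristic $\neq p$; $\xi_p$ is a primitive $p$th root of unity, $F=F_0(\xi_p)$, $K=K_0(\xi_p)$, $s=[F:F_0]$ (prime to $p$), so $\mathrm{Gal}(K/F_0)\cong\mathrm{Gal}(F/F_0)\times\mathrm{Gal}(K_0/F_0)$. Let $\epsilon\in\mathrm{Gal}(K/F_0)$ fix $K_0$ and restrict to a generator of $\mathrm{Gal}(F/F_0)$, and let $\sigma\in\mathrm{Gal}(K/F_0)$ fix $F$ and restrict to a generator of $\mathrm{Gal}(K_0/F_0)$; then $G=\mathrm{Gal}(K/F)=\langle\sigma\rangle$, $\epsilon\sigma=\sigma\epsilon$, and $K=F(\sqrt[p]{a})$ for some $a\in F^\times$ chosen with $\sigma(\sqrt[p]{a})=\xi_p\sqrt[p]{a}$. Let $t\in\mathbb{Z}$ with $\epsilon(\xi_p)=\xi_p^t$. $\rho=\sigma-1$. $J=K^\times/K^{\times p}$ written multiplicatively with exponential Galois action, $J_i=\ker(\rho^i)$, and $J^\epsilon=\{x\in J: \epsilon(x)=x^t\}$ (an $\mathbb{F}_p[G]$-submodule). For $[\gamma]\in J_{p-1}$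 the index $e([\gamma])\in\mathbb{F}_p$ is defined by $\xi_p^{e([\gamma])}=\sigma(\delta)/\delta$ where $\delta\in K$ is any $p$th root of $N_{K/F}(\gamma)$. *)

theory Defs
  imports Main "HOL-Computational_Algebra.Primes"
begin

text \<open>The field K is modelled as the ambient type 'a :: field; subfields are subsets.\<close>

definition field_aut :: "('a::field \<Rightarrow> 'a) \<Rightarrow> bool" where
  "field_aut f \<longleftrightarrow> bij f \<and> (\<forall>x y. f (x + y) = f x + f y) \<and> (\<forall>x y. f (x * y) = f x * f y)"

definition is_subfield :: "'a::field set \<Rightarrow> bool" where
  "is_subfield S \<longleftrightarrow> 0 \<in> S \<and> 1 \<in> S \<and> (\<forall>x\<in>S. \<forall>y\<in>S. x + y \<in> S \<and> x - y \<in> S \<and> x * y \<in> S)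
     \<and> (\<forall>x\<in>S. x \<noteq> 0 \<longrightarrow> inverse x \<in> S)"

definition gen_field :: "'a::field set \<Rightarrow> 'a set" where
  "gen_field A = \<Inter>{S. is_subfield S \<and> A \<subseteq> S}"

text \<open>Elements of J = K^x / K^xp are represented by nonzero elements of K;
  x is trivial in J iff x is a p-th power.\<close>
definition pth_power :: "nat \<Rightarrow> 'a::field \<Rightarrow> bool" where
  "pth_power p x \<longleftrightarrow> (\<exists>w. x = w ^ p)"

text \<open>rho = sigma - 1, written multiplicatively: x \<mapsto> sigma(x)/x.\<close>
definition rho_op :: "('a::field \<Rightarrow> 'a) \<Rightarrow> 'a \<Rightarrow> 'a" where
  "rho_op \<sigma> x = \<sigma> x / x"

text \<open>J_i = ker(rho^i), as a set of representatives in K^x.\<close>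
definition J_ker :: "nat \<Rightarrow> ('a::field \<Rightarrow> 'a) \<Rightarrow> nat \<Rightarrow> 'a set" where
  "J_ker p \<sigma> i = {x. x \<noteq> 0 \<and> pth_power p ((rho_op \<sigma> ^^ i) x)}"

definition J_eps :: "nat \<Rightarrow> ('a::field \<Rightarrow> 'a) \<Rightarrow> int \<Rightarrow> 'a set" where
  "J_eps p \<epsilon> t = {x. x \<noteq> 0 \<and> pth_power p (\<epsilon> x / (x powi t))}"

definition normKF :: "nat \<Rightarrow> ('a::field \<Rightarrow> 'a) \<Rightarrow> 'a \<Rightarrow> 'a" where
  "normKF p \<sigma> \<gamma> = (\<Prod>i<p. (\<sigma> ^^ i) \<gamma>)"

text \<open>The index e([gamma]) in F_p, represented by its residue in {0..<p}:
  xi^e = sigma(delta)/delta for a p-th root delta of N(gamma).\<close>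
definition index_e :: "nat \<Rightarrow> ('a::field \<Rightarrow> 'a) \<Rightarrow> 'a \<Rightarrow> 'a \<Rightarrow> nat" where
  "index_e p \<sigma> \<xi> \<gamma> = (SOME c. c < p \<and> (\<exists>\<delta>. \<delta> ^ p = normKF p \<sigma> \<gamma> \<and> \<sigma> \<delta> = \<xi> ^ c * \<delta>))"

text \<open>An F_p[G]-submodule of J, given by its (saturated) set of representatives in K^x.\<close>
definition J_submodule :: "nat \<Rightarrow> ('a::field \<Rightarrow> 'a) \<Rightarrow> 'a set \<Rightarrow> bool" where
  "J_submodule p \<sigma> M \<longleftrightarrow> M \<subseteq> {x. x \<noteq> 0}
     \<and> (\<forall>x. x \<noteq> 0 \<longrightarrow> pth_power p x \<longrightarrow> x \<in> M)
     \<and> (\<forall>x\<in>M. \<forall>y\<in>M. x * y \<in> M)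
     \<and> (\<forall>x\<in>M. inverse x \<in> M)
     \<and> (\<forall>x\<in>M. \<sigma> x \<in> M)"

end

theory Submission
  imports Defs "HOL-Computational_Algebra.Polynomial" "HOL-Number_Theory.Cong"
begin


lemma aut_add: "field_aut f \<Longrightarrow> f (x + y) = f x + f y" by (simp add: field_aut_def)
lemma aut_mult: "field_aut f \<Longrightarrow> f (x * y) = f x * f y" by (simp add: field_aut_def)
lemma aut_inj: "field_aut f \<Longrightarrow> f x = f y \<Longrightarrow> x = y"
  by (auto simp: field_aut_def bij_def inj_def)
lemma aut_0: "field_aut f \<Longrightarrow> f 0 = 0"
  using aut_add[of f 0 0] by (metis add.right_neutral add_left_cancel)
lemma aut_eq0: "field_aut f \<Longrightarrow> (f x = 0) = (x = 0)"
  using aut_inj[of f x 0] aut_0[of f] by auto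
lemma aut_1: "field_aut (f::'a::field\<Rightarrow>'a) \<Longrightarrow> f 1 = 1"
proof -
  assume a: "field_aut f"
  have "f 1 = f 1 * f 1" using aut_mult[OF a, of 1 1] by simp
  moreover have "f 1 \<noteq> 0" using aut_eq0[OF a, of 1] by simp
  ultimately show ?thesis by (metis mult_cancel_left1)
qed
lemma aut_inverse: "field_aut (f::'a::field\<Rightarrow>'a) \<Longrightarrow> f (inverse x) = inverse (f x)"
proof (cases "x = 0")
  case True assume "field_aut f" then show ?thesis using True by (simp add: aut_0)
next
  case False assume a: "field_aut f"
  have "f x * f (inverse x) = 1" using aut_mult[OF a, of x "inverse x"] False aut_1[OF a] by simp
  then show ?thesis by (metis inverse_unique)
qed
lemma aut_div: "field_aut (f::'a::field\<Rightarrow>'a) \<Longrightarrow> f (x / y) = f x / f y"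
  by (simp add: divide_inverse aut_mult aut_inverse)
lemma aut_power: "field_aut (f::'a::field\<Rightarrow>'a) \<Longrightarrow> f (x ^ n) = f x ^ n"
  by (induction n) (simp_all add: aut_1 aut_mult)
lemma aut_powi: "field_aut (f::'a::field\<Rightarrow>'a) \<Longrightarrow> f (x powi k) = f x powi k"
  by (simp add: power_int_def aut_power aut_inverse)
lemma aut_prod: "field_aut (f::'a::field\<Rightarrow>'a) \<Longrightarrow> f (prod g A) = (\<Prod>i\<in>A. f (g i))"
  by (induction A rule: infinite_finite_induct) (simp_all add: aut_1 aut_mult)
lemma aut_comp: "field_aut f \<Longrightarrow> field_aut g \<Longrightarrow> field_aut (f \<circ> g)"
  by (auto simp: field_aut_def bij_comp)
lemma aut_id: "field_aut id" by (simp add: field_aut_def)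
lemma aut_funpow: "field_aut f \<Longrightarrow> field_aut (f ^^ n)"
  by (induction n) (simp_all add: aut_id aut_comp)
lemma funpow_commute: "f \<circ> g = g \<circ> f \<Longrightarrow> (f ^^ m) ((g ^^ n) x) = (g ^^ n) ((f ^^ m) x)"
proof -
  assume c: "f \<circ> g = g \<circ> f"
  have 1: "f ((g ^^ n) y) = (g ^^ n) (f y)" for y
    by (induction n) (simp_all, metis c comp_apply)
  show ?thesis by (induction m) (simp_all add: 1)
qed

lemma prod_powi: "(prod f A) powi n = (\<Prod>i\<in>A. f i powi n)" for f :: "_ \<Rightarrow> 'a::field"
  by (induction A rule: infinite_finite_induct) (simp_all add: power_int_mult_distrib)
lemma powi_sum: "(x::'a::field) \<noteq> 0 \<Longrightarrow> (\<Prod>i\<in>A. x powi f i) = x powi (sum f A)"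
  by (induction A rule: infinite_finite_induct) (simp_all add: power_int_add)

abbreviation pp where "pp p x \<equiv> pth_power p x"

lemma pp_pow: "pp p (w ^ p)" by (auto simp: pth_power_def)
lemma pp_1: "pp p 1" using pp_pow[of p 1] by simp
lemma pp_mult: "pp p x \<Longrightarrow> pp p y \<Longrightarrow> pp p (x * y)"
  by (auto simp: pth_power_def power_mult_distrib[symmetric])
lemma pp_inverse: "pp p (x::'a::field) \<Longrightarrow> pp p (inverse x)"
  by (auto simp: pth_power_def power_inverse[symmetric])
lemma pp_div: "pp p (x::'a::field) \<Longrightarrow> pp p y \<Longrightarrow> pp p (x / y)"
  by (simp add: divide_inverse pp_mult pp_inverse)
lemma pp_powi: "pp p (x::'a::field) \<Longrightarrow> pp p (x powi k)"
proof -
  assume "pp p x"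
  then obtain w where w: "x = w ^ p" by (auto simp: pth_power_def)
  have "x powi k = (w powi k) ^ p" unfolding w power_int_power power_int_power' by (simp add: mult.commute)
  then show ?thesis by (auto simp: pth_power_def)
qed
lemma pp_powi_mult: "pp p ((x::'a::field) powi (int p * k))"
  by (metis power_int_mult power_int_of_nat pp_pow pp_powi)
lemma pp_powi_dvd: "int p dvd k \<Longrightarrow> pp p ((x::'a::field) powi k)"
  using pp_powi_mult by (auto simp: dvd_def)
lemma pp_aut: "field_aut (f::'a::field\<Rightarrow>'a) \<Longrightarrow> pp p x \<Longrightarrow> pp p (f x)"
  by (auto simp: pth_power_def aut_power)
lemma pp_prod: "(\<And>i. i \<in> A \<Longrightarrow> pp p (g i)) \<Longrightarrow> pp p (prod g A)"
  by (induction A rule: infinite_finite_induct) (simp_all add: pp_1 pp_mult)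
lemma pp_cong: "(x::'a::field) \<noteq> 0 \<Longrightarrow> [a = b] (mod int p) \<Longrightarrow> pp p (x powi a / x powi b)"
  by (simp add: power_int_diff[symmetric] pp_powi_dvd cong_iff_dvd_diff dvd_diff_commute)

definition peq :: "nat \<Rightarrow> 'a::field \<Rightarrow> 'a \<Rightarrow> bool" where
  "peq p x y \<longleftrightarrow> x \<noteq> 0 \<and> y \<noteq> 0 \<and> pp p (x / y)"

lemma peq_refl: "x \<noteq> 0 \<Longrightarrow> peq p x x" by (simp add: peq_def pp_1)
lemma peq_sym: "peq p x y \<Longrightarrow> peq p y x"
  by (auto simp: peq_def dest: pp_inverse)
lemma peq_trans: "peq p x y \<Longrightarrow> peq p y z \<Longrightarrow> peq p x z"
proof -
  assume a: "peq p x y" "peq p y z"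
  then have "x / z = (x / y) * (y / z)" by (simp add: peq_def)
  then show ?thesis using a unfolding peq_def by (metis pp_mult)
qed
lemma peq_mult: "peq p x y \<Longrightarrow> peq p x' y' \<Longrightarrow> peq p (x * x') (y * y')"
  by (auto simp: peq_def dest: pp_mult)
lemma peq_inverse: "peq p x y \<Longrightarrow> peq p (inverse x) (inverse y)"
  by (auto simp: peq_def dest: pp_inverse simp: field_simps)
lemma peq_div: "peq p x y \<Longrightarrow> peq p x' y' \<Longrightarrow> peq p (x / x') (y / y')"
  by (simp add: divide_inverse peq_mult peq_inverse)
lemma peq_powi: "peq p x y \<Longrightarrow> peq p (x powi k) (y powi k)"
  by (auto simp: peq_def power_int_divide_distrib[symmetric] pp_powi)
lemma peq_aut: "field_aut f \<Longrightarrow> peq p x y \<Longrightarrow> peq p (f x) (f y)"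
  by (auto simp: peq_def aut_eq0 aut_div[symmetric] pp_aut)
lemma peq_prod: "(\<And>i. i \<in> A \<Longrightarrow> peq p (g i) (h i)) \<Longrightarrow> peq p (prod g A) (prod h A)"
  by (induction A rule: infinite_finite_induct) (simp_all add: peq_refl peq_mult)
lemma peq_cong: "(x::'a::field) \<noteq> 0 \<Longrightarrow> [a = b] (mod int p) \<Longrightarrow> peq p (x powi a) (x powi b)"
  by (simp add: peq_def pp_cong)
lemma peq_pp: "peq p x y \<Longrightarrow> pp p y \<Longrightarrow> pp p x"
proof -
  assume a: "peq p x y" "pp p y"
  then have "x = (x / y) * y" by (simp add: peq_def)
  then show ?thesis using a by (metis peq_def pp_mult)
qed
lemma peq_ppI: "x \<noteq> 0 \<Longrightarrow> y \<noteq> 0 \<Longrightarrow> pp p (x / y) \<Longrightarrow> peq p x y" by (simp add: peq_def)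




locale kum0 =
  fixes p :: nat and \<sigma> \<epsilon> :: "'a::field \<Rightarrow> 'a" and \<xi> :: 'a and t :: int and s :: nat
  assumes prime: "prime p" and odd: "odd p"
  and a\<sigma>: "field_aut \<sigma>" and a\<epsilon>: "field_aut \<epsilon>" and \<sigma>p: "\<sigma> ^^ p = id" and s_pos: "s > 0"
  and \<epsilon>s: "\<epsilon> ^^ s = id" and comm: "\<epsilon> \<circ> \<sigma> = \<sigma> \<circ> \<epsilon>"
  and \<xi>p: "\<xi> ^ p = 1" and \<xi>1: "\<xi> \<noteq> 1" and \<sigma>\<xi>: "\<sigma> \<xi> = \<xi>" and \<epsilon>\<xi>: "\<epsilon> \<xi> = \<xi> powi t"
begin

abbreviation N where "N \<equiv> normKF p \<sigma>"

lemma p_pos: "p > 0" using prime prime_gt_0_nat by blast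

lemma a\<sigma>n: "field_aut (\<sigma> ^^ i)" by (rule aut_funpow[OF a\<sigma>])
lemma a\<epsilon>n: "field_aut (\<epsilon> ^^ i)" by (rule aut_funpow[OF a\<epsilon>])

lemma N_nz: "x \<noteq> 0 \<Longrightarrow> N x \<noteq> 0"
  by (simp add: normKF_def aut_eq0[OF a\<sigma>n])
lemma N_mult: "N (x * y) = N x * N y"
  by (simp add: normKF_def aut_mult[OF a\<sigma>n] prod.distrib)
lemma N_powi: "N (x powi k) = N x powi k"
  by (simp add: normKF_def aut_powi[OF a\<sigma>n] prod_powi)
lemma N_power: "N (x ^ k) = N x ^ k"
  by (simp add: normKF_def aut_power[OF a\<sigma>n] prod_power_distrib)
lemma N_inverse: "N (inverse x) = inverse (N x)"
  using prod_inversef[of "\<lambda>i. (\<sigma> ^^ i) x" "{..<p}"] by (simp add: normKF_def aut_inverse[OF a\<sigma>n] comp_def)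
lemma N_div: "N (x / y) = N x / N y"
  by (simp add: divide_inverse N_mult N_inverse)
lemma N_pp: "pp p y \<Longrightarrow> pp p (N y)"
  by (auto simp: pth_power_def N_power)
lemma N_peq: "peq p x y \<Longrightarrow> peq p (N x) (N y)"
  by (auto simp: peq_def N_nz N_div[symmetric] N_pp)
lemma N_eps: "N ((\<epsilon> ^^ k) x) = (\<epsilon> ^^ k) (N x)"
  by (simp add: normKF_def aut_prod[OF a\<epsilon>n] funpow_commute[OF comm])
lemma N_prod: "N (prod g A) = (\<Prod>k\<in>A. N (g k))"
  by (simp add: normKF_def aut_prod[OF a\<sigma>n] prod.swap[of _ A])

lemma \<sigma>p_x: "(\<sigma> ^^ p) x = x" by (simp add: \<sigma>p)

lemma \<sigma>N: "\<sigma> (N x) = N x"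
proof -
  obtain q where q: "p = Suc q" using p_pos gr0_implies_Suc by blast
  have "\<sigma> (N x) = (\<Prod>i<p. (\<sigma> ^^ Suc i) x)"
    by (simp add: normKF_def aut_prod[OF a\<sigma>])
  also have "\<dots> = (\<Prod>i<q. (\<sigma> ^^ Suc i) x) * x"
    using \<sigma>p_x q by (simp del: funpow.simps)
  also have "\<dots> = N x"
    unfolding normKF_def q prod.lessThan_Suc_shift by (simp del: funpow.simps add: mult.commute)
  finally show ?thesis .
qed

lemma \<xi>nz: "\<xi> \<noteq> 0" using \<xi>p p_pos by (metis zero_power zero_neq_one)

lemma \<xi>_pow_mod: "\<xi> ^ n = \<xi> ^ (n mod p)"
proof -
  have "\<xi> ^ n = \<xi> ^ (p * (n div p) + n mod p)" by simp
  also have "\<dots> = \<xi> ^ (n mod p)" by (simp only: power_add power_mult \<xi>p) simp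
  finally show ?thesis .
qed

lemma \<xi>_inj_aux: "i < j \<Longrightarrow> j < p \<Longrightarrow> \<xi> ^ i = \<xi> ^ j \<Longrightarrow> False"
proof -
  assume ij: "i < j" "j < p" "\<xi> ^ i = \<xi> ^ j"
  define d where "d = j - i"
  have "j = i + d" using ij by (simp add: d_def)
  then have "\<xi> ^ j = \<xi> ^ i * \<xi> ^ d" by (simp add: power_add)
  then have d1: "\<xi> ^ d = 1" using ij \<xi>nz by simp
  have "coprime d p" using prime ij unfolding d_def
    by (metis coprime_commute prime_imp_coprime dvd_imp_le less_imp_diff_less zero_less_diff leD)
  then obtain u where u: "[d * u = Suc 0] (mod p)" using cong_solve_coprime_nat by blast
  have "\<xi> = \<xi> ^ ((d * u) mod p)" using u prime_gt_1_nat[OF prime] by (simp add: cong_def)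
  also have "\<dots> = \<xi> ^ (d * u)" using \<xi>_pow_mod by simp
  also have "\<dots> = 1" by (simp add: power_mult d1)
  finally show False using \<xi>1 by simp
qed

lemma \<xi>_inj: "i < p \<Longrightarrow> j < p \<Longrightarrow> \<xi> ^ i = \<xi> ^ j \<Longrightarrow> i = j"
  using \<xi>_inj_aux by (metis linorder_neqE_nat)

lemma roots: "\<zeta> ^ p = 1 \<Longrightarrow> \<exists>j<p. \<zeta> = \<xi> ^ j"
proof -
  assume z: "\<zeta> ^ p = 1"
  define Q :: "'a poly" where "Q = monom 1 p - 1"
  have pQ: "poly Q x = x ^ p - 1" for x by (simp add: Q_def poly_monom)
  have "poly Q 0 \<noteq> 0" using p_pos by (simp add: pQ power_0_left)
  then have Q0: "Q \<noteq> 0" by auto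
  have S: "{x. x ^ p = 1} = {x. poly Q x = 0}" by (simp add: pQ)
  have fin: "finite {x::'a. x ^ p = 1}" unfolding S using poly_roots_finite[OF Q0] .
  have d1: "degree Q \<le> degree (monom (1::'a) p)" unfolding Q_def
    using degree_diff_le_max[of "monom (1::'a) p" 1] by simp
  have "degree Q \<le> p" using order_trans[OF d1 degree_monom_le] .
  then have cS: "card {x::'a. x ^ p = 1} \<le> p" unfolding S using card_poly_roots_bound[OF Q0] by linarith
  have sub: "(\<lambda>j. \<xi> ^ j) ` {..<p} \<subseteq> {x. x ^ p = 1}"
    using \<xi>p by (auto simp: power_mult[symmetric]) (metis power_mult mult.commute power_one)
  have "inj_on (\<lambda>j. \<xi> ^ j) {..<p}" by (auto intro: inj_onI \<xi>_inj)
  then have "card ((\<lambda>j. \<xi> ^ j) ` {..<p}) = p" by (simp add: card_image)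
  then have "(\<lambda>j. \<xi> ^ j) ` {..<p} = {x. x ^ p = 1}"
    using card_subset_eq[OF fin sub] cS card_mono[OF fin sub] by linarith
  then show ?thesis using z by auto
qed

lemma \<xi>_powi_cong: "[x = y] (mod int p) \<Longrightarrow> \<xi> powi x = \<xi> powi y"
proof -
  assume "[x = y] (mod int p)"
  then obtain k where k: "x = y + int p * k" by (metis cong_iff_lin cong_sym)
  have "\<xi> powi x = \<xi> powi y * (\<xi> ^ p) powi k"
    unfolding k using \<xi>nz by (simp add: power_int_add power_int_mult)
  then show ?thesis by (simp add: \<xi>p)
qed

lemma \<xi>_powi_one: "\<xi> powi n = 1 \<Longrightarrow> int p dvd n"
proof -
  assume n: "\<xi> powi n = 1"
  define r where "r = n mod int p"
  have r0: "r \<ge> 0" "r < int p" using p_pos by (simp_all add: r_def)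
  have "\<xi> powi r = 1" using n \<xi>_powi_cong[of r n] by (simp add: r_def cong_def)
  then have "\<xi> ^ nat r = \<xi> ^ 0" using r0 by (simp add: power_int_def)
  then have "nat r = 0" using \<xi>_inj[of "nat r" 0] r0 p_pos by linarith
  then have "r = 0" using r0 by simp
  then show ?thesis by (simp add: r_def dvd_eq_mod_eq_0)
qed

lemma \<epsilon>k\<xi>: "(\<epsilon> ^^ k) \<xi> = \<xi> powi (t ^ k)"
proof (induction k)
  case 0 then show ?case by simp
next
  case (Suc k)
  have "(\<epsilon> ^^ Suc k) \<xi> = \<epsilon> (\<xi> powi (t ^ k))" using Suc by simp
  also have "\<dots> = \<xi> powi (t * t ^ k)" by (simp add: aut_powi[OF a\<epsilon>] \<epsilon>\<xi> power_int_mult)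
  finally show ?case by simp
qed

lemma ts: "[t ^ s = 1] (mod int p)"
proof -
  have "\<xi> powi (t ^ s) = \<xi> powi 1" using \<epsilon>k\<xi>[of s] \<epsilon>s by simp
  then have "\<xi> powi (t ^ s - 1) = 1" using \<xi>nz by (simp add: power_int_diff)
  then show ?thesis using \<xi>_powi_one by (simp add: cong_iff_dvd_diff)
qed

definition has_index where
  "has_index y c \<longleftrightarrow> c < p \<and> (\<exists>\<delta>. \<delta> ^ p = N y \<and> \<sigma> \<delta> = \<xi> ^ c * \<delta>)"

lemma index_unique: "y \<noteq> 0 \<Longrightarrow> has_index y c \<Longrightarrow> index_e p \<sigma> \<xi> y = c"
proof -
  assume y: "y \<noteq> 0" and h: "has_index y c"
  from h obtain \<delta> where c: "c < p" and d: "\<delta> ^ p = N y" "\<sigma> \<delta> = \<xi> ^ c * \<delta>"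
    by (auto simp: has_index_def)
  have "\<exists>c. c < p \<and> (\<exists>\<delta>. \<delta> ^ p = N y \<and> \<sigma> \<delta> = \<xi> ^ c * \<delta>)" using c d by blast
  then have "index_e p \<sigma> \<xi> y < p \<and> (\<exists>\<delta>. \<delta> ^ p = N y \<and> \<sigma> \<delta> = \<xi> ^ (index_e p \<sigma> \<xi> y) * \<delta>)"
    unfolding index_e_def by (rule someI_ex)
  then obtain \<delta>' where c': "index_e p \<sigma> \<xi> y < p" and d': "\<delta>' ^ p = N y" "\<sigma> \<delta>' = \<xi> ^ (index_e p \<sigma> \<xi> y) * \<delta>'"
    by blast
  have dnz: "\<delta> \<noteq> 0" using d(1) N_nz[OF y] p_pos by (metis zero_power)
  have d'nz: "\<delta>' \<noteq> 0" using d'(1) N_nz[OF y] p_pos by (metis zero_power)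
  have "(\<delta>' / \<delta>) ^ p = 1" using d(1) d'(1) dnz N_nz[OF y] by (simp add: power_divide)
  then obtain j where j: "\<delta>' / \<delta> = \<xi> ^ j" using roots by blast
  then have dd: "\<delta>' = \<xi> ^ j * \<delta>" using dnz by (simp add: field_simps)
  have "\<sigma> \<delta>' = \<xi> ^ j * (\<xi> ^ c * \<delta>)" unfolding dd by (simp add: aut_mult[OF a\<sigma>] aut_power[OF a\<sigma>] \<sigma>\<xi> d(2))
  then have "\<xi> ^ j * (\<xi> ^ c * \<delta>) = \<xi> ^ (index_e p \<sigma> \<xi> y) * (\<xi> ^ j * \<delta>)" using d'(2) dd by simp
  then have "\<xi> ^ c = \<xi> ^ (index_e p \<sigma> \<xi> y)" using dnz \<xi>nz by (simp add: field_simps)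
  then show ?thesis using \<xi>_inj c c' by metis
qed

lemma index_exists: "pp p (N x) \<Longrightarrow> \<exists>c. has_index x c"
proof -
  assume "pp p (N x)"
  then obtain w where w: "N x = w ^ p" by (auto simp: pth_power_def)
  show ?thesis
  proof (cases "w = 0")
    case True
    then show ?thesis using w p_pos by (auto simp: has_index_def intro!: exI[of _ 0] exI[of _ 0] simp: aut_0[OF a\<sigma>])
  next
    case False
    have "(\<sigma> w) ^ p = w ^ p" using \<sigma>N[of x] w by (simp add: aut_power[OF a\<sigma>])
    then have "(\<sigma> w / w) ^ p = 1" using False by (simp add: power_divide)
    then obtain j where j: "j < p" "\<sigma> w / w = \<xi> ^ j" using roots by blast
    then have "\<sigma> w = \<xi> ^ j * w" using False by (simp add: field_simps)
    then show ?thesis using j w by (auto simp: has_index_def)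
  qed
qed

lemma has_index_mult_pp: "has_index y c \<Longrightarrow> has_index (y * r ^ p) c"
proof -
  assume "has_index y c"
  then obtain \<delta> where c: "c < p" and d: "\<delta> ^ p = N y" "\<sigma> \<delta> = \<xi> ^ c * \<delta>"
    by (auto simp: has_index_def)
  have "(\<delta> * N r) ^ p = N (y * r ^ p)" by (simp add: N_mult N_power d power_mult_distrib)
  moreover have "\<sigma> (\<delta> * N r) = \<xi> ^ c * (\<delta> * N r)" by (simp add: aut_mult[OF a\<sigma>] \<sigma>N d)
  ultimately show ?thesis using c by (auto simp: has_index_def)
qed

lemma has_index_pp: "has_index (w ^ p) 0"
  using p_pos by (auto simp: has_index_def N_power \<sigma>N)

end

locale kum = kum0 p \<sigma> \<epsilon> \<xi> t s for p \<sigma> \<epsilon> \<xi> t s +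
  fixes m a :: int
  assumes ms: "[m * int s = 1] (mod int p)" and ta: "[t * a = 1] (mod int p)"




context kum
begin

definition Ef where "Ef f x = (\<Prod>i<p. (\<sigma> ^^ i) x powi f i)"
definition cf :: "nat \<Rightarrow> nat \<Rightarrow> int" where "cf n i = (-1) ^ (n - i) * int (n choose i)"

lemma Ef_nz: "x \<noteq> 0 \<Longrightarrow> Ef f x \<noteq> 0"
  by (simp add: Ef_def aut_eq0[OF a\<sigma>n])

lemma Ef_div: "x \<noteq> 0 \<Longrightarrow> Ef f x / Ef g x = Ef (\<lambda>i. f i - g i) x"
  unfolding Ef_def prod_dividef[symmetric]
  by (intro prod.cong refl) (simp add: power_int_diff aut_eq0[OF a\<sigma>n])

lemma \<sigma>_Ef: "f (p - 1) = 0 \<Longrightarrow> \<sigma> (Ef f x) = Ef (\<lambda>i. if i = 0 then 0 else f (i - 1)) x"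
proof -
  assume f: "f (p - 1) = 0"
  obtain q where q: "p = Suc q" using p_pos gr0_implies_Suc by blast
  have "\<sigma> (Ef f x) = (\<Prod>i<p. (\<sigma> ^^ Suc i) x powi f i)"
    by (simp add: Ef_def aut_prod[OF a\<sigma>] aut_powi[OF a\<sigma>])
  also have "\<dots> = (\<Prod>i<q. (\<sigma> ^^ Suc i) x powi f i)"
    using f q by (simp del: funpow.simps)
  also have "\<dots> = Ef (\<lambda>i. if i = 0 then 0 else f (i - 1)) x"
    unfolding Ef_def unfolding q prod.lessThan_Suc_shift by (simp del: funpow.simps)
  finally show ?thesis .
qed

lemma cf_step: "(if i = 0 then 0 else cf n (i - 1)) - cf n i = cf (Suc n) i"
proof (cases i)
  case 0 then show ?thesis by (simp add: cf_def)
next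
  case (Suc j)
  show ?thesis
  proof (cases "j < n")
    case True
    then have e: "n - j = Suc (n - Suc j)" by simp
    show ?thesis using Suc by (simp add: cf_def e algebra_simps)
  next
    case False
    then show ?thesis using Suc by (simp add: cf_def)
  qed
qed

lemma rho_E: "n < p \<Longrightarrow> x \<noteq> 0 \<Longrightarrow> (rho_op \<sigma> ^^ n) x = Ef (cf n) x"
proof (induction n)
  case 0
  obtain q where q: "p = Suc q" using p_pos gr0_implies_Suc by blast
  have "Ef (cf 0) x = x" unfolding Ef_def unfolding q prod.lessThan_Suc_shift by (simp add: cf_def)
  then show ?case by simp
next
  case (Suc n)
  have z: "cf n (p - 1) = 0" using Suc.prems by (simp add: cf_def)
  have "(rho_op \<sigma> ^^ Suc n) x = \<sigma> (Ef (cf n) x) / Ef (cf n) x"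
  proof -
    have "(rho_op \<sigma> ^^ n) x = Ef (cf n) x" using Suc by simp
    then show ?thesis by (simp only: funpow.simps comp_apply) (simp add: rho_op_def)
  qed
  also have "\<dots> = Ef (cf (Suc n)) x"
    unfolding \<sigma>_Ef[of "cf n", OF z] Ef_div[OF Suc.prems(2)] cf_step ..
  finally show ?case .
qed

lemma binom_cong: "i < p \<Longrightarrow> [int (p - 1 choose i) = (-1) ^ i] (mod int p)"
proof (induction i)
  case 0 then show ?case by simp
next
  case (Suc i)
  have pp1: "p = Suc (p - 1)" using p_pos by simp
  have "p choose Suc i = (p - 1 choose i) + (p - 1 choose Suc i)"
    by (subst pp1) simp
  moreover have "p dvd (p choose Suc i)" using dvd_choose_prime[OF Suc.prems _ _ prime] p_pos by simp
  ultimately have "int p dvd int (p - 1 choose i) + int (p - 1 choose Suc i)"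
    by (metis of_nat_add of_nat_dvd_iff)
  then have "[int (p - 1 choose Suc i) = - int (p - 1 choose i)] (mod int p)"
    by (simp add: cong_iff_dvd_diff add.commute)
  moreover have "[- int (p - 1 choose i) = - ((-1) ^ i)] (mod int p)"
    using Suc by (simp add: cong_minus_minus_iff)
  ultimately show ?case by (auto elim: cong_trans)
qed

lemma cf_cong: "i < p \<Longrightarrow> [cf (p - 1) i = 1] (mod int p)"
proof -
  assume i: "i < p"
  have "[cf (p - 1) i = (-1) ^ (p - 1 - i) * (-1) ^ i] (mod int p)"
    unfolding cf_def by (intro cong_scalar_left binom_cong i)
  moreover have "(-1 :: int) ^ (p - 1 - i) * (-1) ^ i = 1"
  proof -
    have "(-1 :: int) ^ (p - 1 - i) * (-1) ^ i = (-1) ^ (p - 1)"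
      using i by (simp add: power_add[symmetric])
    moreover have "even (p - 1)" using odd p_pos by simp
    ultimately show ?thesis by simp
  qed
  ultimately show ?thesis by simp
qed

lemma rho_N: "x \<noteq> 0 \<Longrightarrow> peq p ((rho_op \<sigma> ^^ (p - 1)) x) (N x)"
proof -
  assume x: "x \<noteq> 0"
  have r: "(rho_op \<sigma> ^^ (p - 1)) x = Ef (cf (p - 1)) x" using rho_E x p_pos by simp
  have n: "N x = Ef (\<lambda>_. 1) x" by (simp add: Ef_def normKF_def)
  have "pp p (Ef (\<lambda>i. cf (p - 1) i - 1) x)"
    unfolding Ef_def
    by (intro pp_prod pp_powi_dvd) (use cf_cong in \<open>auto simp: cong_iff_dvd_diff\<close>)
  then show ?thesis unfolding r n using x by (simp add: peq_def Ef_nz Ef_div)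
qed

lemma K_iff: "x \<in> J_ker p \<sigma> (p - 1) \<longleftrightarrow> x \<noteq> 0 \<and> pp p (N x)"
  using rho_N peq_pp peq_sym unfolding J_ker_def by blast

end



lemma powi_pow_swap: "((y::'a::field) powi e) ^ n = (y ^ n) powi e"
  by (simp add: power_int_power power_int_power' mult.commute)

context kum
begin

definition P where "P x = (\<Prod>k<s. (\<epsilon> ^^ k) x powi (m * a ^ k))"

lemma P_nz: "x \<noteq> 0 \<Longrightarrow> P x \<noteq> 0"
  by (simp add: P_def aut_eq0[OF a\<epsilon>n])
lemma P_mult: "P (x * y) = P x * P y"
  by (simp add: P_def aut_mult[OF a\<epsilon>n] power_int_mult_distrib prod.distrib)
lemma P_inverse: "P (inverse x) = inverse (P x)"
  using prod_inversef[of "\<lambda>k. (\<epsilon> ^^ k) x powi (m * a ^ k)" "{..<s}"]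
  by (simp add: P_def aut_inverse[OF a\<epsilon>n] power_int_inverse comp_def)
lemma P_div: "P (x / y) = P x / P y"
  by (simp add: divide_inverse P_mult P_inverse)
lemma P_pp: "pp p y \<Longrightarrow> pp p (P y)"
  unfolding P_def by (intro pp_prod pp_powi pp_aut[OF a\<epsilon>n])
lemma P_peq: "peq p x y \<Longrightarrow> peq p (P x) (P y)"
  by (auto simp: peq_def P_nz P_div[symmetric] P_pp)
lemma P_\<sigma>: "P (\<sigma> x) = \<sigma> (P x)"
proof -
  have "(\<epsilon> ^^ k) (\<sigma> x) = \<sigma> ((\<epsilon> ^^ k) x)" for k
    using funpow_commute[OF comm, of k 1 x] by simp
  then show ?thesis by (simp add: P_def aut_prod[OF a\<sigma>] aut_powi[OF a\<sigma>])
qed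

lemma sum_cong1: "[(\<Sum>k<s. t ^ k * (m * a ^ k)) = 1] (mod int p)"
proof -
  have "[(\<Sum>k<s. t ^ k * (m * a ^ k)) = (\<Sum>k<s. m)] (mod int p)"
  proof (rule cong_sum)
    fix k
    have "[(t * a) ^ k = 1 ^ k] (mod int p)" by (rule cong_pow[OF ta])
    then have "[m * (t * a) ^ k = m * 1 ^ k] (mod int p)" by (rule cong_scalar_left)
    then show "[t ^ k * (m * a ^ k) = m] (mod int p)" by (simp add: power_mult_distrib algebra_simps)
  qed
  moreover have "(\<Sum>k<s. m) = m * int s" by simp
  ultimately show ?thesis using ms by (metis cong_trans)
qed

lemma eps_base: "u \<in> J_eps p \<epsilon> t \<Longrightarrow> peq p (\<epsilon> u) (u powi t)"
  by (simp add: J_eps_def peq_def aut_eq0[OF a\<epsilon>])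

lemma \<epsilon>k_peq: "u \<in> J_eps p \<epsilon> t \<Longrightarrow> peq p ((\<epsilon> ^^ k) u) (u powi (t ^ k))"
proof (induction k)
  case 0 then show ?case by (simp add: J_eps_def peq_refl)
next
  case (Suc k)
  have "peq p (\<epsilon> ((\<epsilon> ^^ k) u)) (\<epsilon> (u powi (t ^ k)))" by (rule peq_aut[OF a\<epsilon> Suc.IH[OF Suc.prems]])
  moreover have "\<epsilon> (u powi (t ^ k)) = (\<epsilon> u) powi (t ^ k)" by (simp add: aut_powi[OF a\<epsilon>])
  moreover have "peq p ((\<epsilon> u) powi (t ^ k)) ((u powi t) powi (t ^ k))"
    by (rule peq_powi[OF eps_base[OF Suc.prems]])
  moreover have "(u powi t) powi (t ^ k) = u powi (t ^ Suc k)" by (simp add: power_int_mult[symmetric])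
  ultimately have "peq p (\<epsilon> ((\<epsilon> ^^ k) u)) (u powi (t ^ Suc k))" using peq_trans by metis
  then show ?case by simp
qed

lemma P_eps: "u \<in> J_eps p \<epsilon> t \<Longrightarrow> peq p (P u) u"
proof -
  assume u: "u \<in> J_eps p \<epsilon> t"
  then have u0: "u \<noteq> 0" by (simp add: J_eps_def)
  have "peq p (P u) (\<Prod>k<s. (u powi (t ^ k)) powi (m * a ^ k))"
    unfolding P_def by (intro peq_prod peq_powi \<epsilon>k_peq u)
  also have "(\<Prod>k<s. (u powi (t ^ k)) powi (m * a ^ k)) = u powi (\<Sum>k<s. t ^ k * (m * a ^ k))"
    by (simp add: power_int_mult[symmetric] powi_sum[OF u0])
  finally have 1: "peq p (P u) (u powi (\<Sum>k<s. t ^ k * (m * a ^ k)))" .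
  have "peq p (u powi (\<Sum>k<s. t ^ k * (m * a ^ k))) (u powi 1)"
    by (rule peq_cong[OF u0 sum_cong1])
  then show ?thesis using 1 peq_trans by fastforce
qed

lemma as_cong: "[a ^ (s - 1) = t] (mod int p)"
proof -
  have "[a ^ (s - 1) * t ^ s = a ^ (s - 1) * 1] (mod int p)" by (rule cong_scalar_left[OF ts])
  moreover have "a ^ (s - 1) * t ^ s = (t * a) ^ (s - 1) * t"
  proof -
    have "t ^ s = t ^ (s - 1) * t" using s_pos by (metis Suc_diff_1 power_Suc2)
    then show ?thesis by (simp add: power_mult_distrib ac_simps)
  qed
  moreover have "[(t * a) ^ (s - 1) * t = 1 ^ (s - 1) * t] (mod int p)"
    by (intro cong_scalar_right cong_pow ta)
  ultimately have "[a ^ (s - 1) = (t * a) ^ (s - 1) * t] (mod int p)" by (simp add: cong_sym)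
  then show ?thesis using \<open>[(t * a) ^ (s - 1) * t = 1 ^ (s - 1) * t] (mod int p)\<close>
    by (simp add: cong_trans)
qed

lemma P_in_eps: "x \<noteq> 0 \<Longrightarrow> P x \<in> J_eps p \<epsilon> t"
proof -
  assume x: "x \<noteq> 0"
  obtain s' where s': "s = Suc s'" using s_pos gr0_implies_Suc by blast
  have "\<epsilon> (P x) = (\<Prod>k<s. (\<epsilon> ^^ Suc k) x powi (m * a ^ k))"
    by (simp add: P_def aut_prod[OF a\<epsilon>] aut_powi[OF a\<epsilon>])
  also have "\<dots> = (\<Prod>k<s'. (\<epsilon> ^^ Suc k) x powi (m * a ^ k)) * x powi (m * a ^ s')"
    using \<epsilon>s s' by (simp del: funpow.simps)
  finally have e1: "\<epsilon> (P x) = (\<Prod>k<s'. (\<epsilon> ^^ Suc k) x powi (m * a ^ k)) * x powi (m * a ^ s')" .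
  have e2: "(P x) powi t = x powi (m * t) * (\<Prod>k<s'. (\<epsilon> ^^ Suc k) x powi (m * a ^ Suc k * t))"
    unfolding P_def prod_powi unfolding s' prod.lessThan_Suc_shift
    by (simp del: funpow.simps add: power_int_mult[symmetric])
  have "peq p (\<epsilon> (P x)) ((P x) powi t)"
    unfolding e1 e2 mult.commute[of "x powi (m * t)"]
  proof (intro peq_mult peq_prod peq_cong)
    show "x \<noteq> 0" by (rule x)
    show "(\<epsilon> ^^ Suc k) x \<noteq> 0" for k using x aut_eq0[OF a\<epsilon>n] by metis
    show "[m * a ^ k = m * a ^ Suc k * t] (mod int p)" for k
    proof -
      have "[m * a ^ k * (t * a) = m * a ^ k * 1] (mod int p)" by (rule cong_scalar_left[OF ta])
      moreover have "m * a ^ k * (t * a) = m * a ^ Suc k * t" by (simp add: ac_simps)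
      ultimately show ?thesis by (metis cong_sym mult_1_right)
    qed
    show "[m * a ^ s' = m * t] (mod int p)" using as_cong s' by (simp add: cong_scalar_left)
  qed
  then show ?thesis using P_nz[OF x] by (simp add: J_eps_def peq_def)
qed

lemma P_K: "pp p (N x) \<Longrightarrow> pp p (N (P x))"
  unfolding P_def N_prod N_powi N_eps by (intro pp_prod pp_powi pp_aut[OF a\<epsilon>n])

lemma has_index_P: "has_index x c \<Longrightarrow> has_index (P x) c"
proof -
  assume "has_index x c"
  then obtain \<delta> where c: "c < p" and d: "\<delta> ^ p = N x" "\<sigma> \<delta> = \<xi> ^ c * \<delta>"
    by (auto simp: has_index_def)
  define \<Delta> where "\<Delta> = (\<Prod>k<s. (\<epsilon> ^^ k) \<delta> powi (m * a ^ k))"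
  have "\<Delta> ^ p = (\<Prod>k<s. ((\<epsilon> ^^ k) (\<delta> ^ p)) powi (m * a ^ k))"
    by (simp add: \<Delta>_def prod_power_distrib powi_pow_swap aut_power[OF a\<epsilon>n])
  also have "\<dots> = N (P x)"
    by (simp add: d P_def N_prod N_powi N_eps)
  finally have D1: "\<Delta> ^ p = N (P x)" .
  have "\<sigma> \<Delta> = (\<Prod>k<s. ((\<xi> powi (t ^ k)) ^ c * (\<epsilon> ^^ k) \<delta>) powi (m * a ^ k))"
  proof -
    have "\<sigma> ((\<epsilon> ^^ k) \<delta>) = (\<epsilon> ^^ k) (\<sigma> \<delta>)" for k
      using funpow_commute[OF comm, of k 1 \<delta>] by simp
    then show ?thesis
      by (simp add: \<Delta>_def aut_prod[OF a\<sigma>] aut_powi[OF a\<sigma>] d aut_mult[OF a\<epsilon>n] aut_power[OF a\<epsilon>n] \<epsilon>k\<xi>)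
  qed
  also have "\<dots> = (\<Prod>k<s. \<xi> powi (int c * (t ^ k * (m * a ^ k))) * (\<epsilon> ^^ k) \<delta> powi (m * a ^ k))"
  proof (rule prod.cong[OF refl])
    fix k
    have e: "t ^ k * int c * (m * a ^ k) = int c * (t ^ k * (m * a ^ k))" by (simp add: ac_simps)
    show "((\<xi> powi (t ^ k)) ^ c * (\<epsilon> ^^ k) \<delta>) powi (m * a ^ k) = \<xi> powi (int c * (t ^ k * (m * a ^ k))) * (\<epsilon> ^^ k) \<delta> powi (m * a ^ k)"
      unfolding power_int_mult_distrib power_int_power' e[symmetric] power_int_mult ..
  qed
  also have "\<dots> = (\<Prod>k<s. \<xi> powi (int c * (t ^ k * (m * a ^ k)))) * \<Delta>"
    unfolding \<Delta>_def by (rule prod.distrib)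
  also have "(\<Prod>k<s. \<xi> powi (int c * (t ^ k * (m * a ^ k)))) = \<xi> powi (int c * (\<Sum>k<s. t ^ k * (m * a ^ k)))"
    by (simp add: powi_sum[OF \<xi>nz] sum_distrib_left)
  also have "\<dots> = \<xi> powi (int c * 1)"
    by (intro \<xi>_powi_cong cong_scalar_left sum_cong1)
  finally have "\<sigma> \<Delta> = \<xi> ^ c * \<Delta>" by simp
  then show ?thesis using D1 c by (auto simp: has_index_def)
qed

end



context kum
begin

lemma main: "\<exists>J\<nu>. J_submodule p \<sigma> J\<nu>
     \<and> (\<forall>x \<in> J_eps p \<epsilon> t \<inter> J\<nu>. pth_power p x)
     \<and> (\<forall>x. x \<noteq> 0 \<longrightarrow> (\<exists>u \<in> J_eps p \<epsilon> t. \<exists>v \<in> J\<nu>. x = u * v))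
     \<and> (\<forall>x \<in> J\<nu> \<inter> J_ker p \<sigma> (p - 1). index_e p \<sigma> \<xi> x = 0)
     \<and> (\<forall>x \<in> J_ker p \<sigma> (p - 1). \<forall>u \<in> J_eps p \<epsilon> t. \<forall>v \<in> J\<nu>.
          pth_power p (x / (u * v)) \<longrightarrow>
            u \<in> J_ker p \<sigma> (p - 1) \<and> index_e p \<sigma> \<xi> u = index_e p \<sigma> \<xi> x)"
proof (intro exI conjI)
  define J\<nu> where "J\<nu> = {x. x \<noteq> 0 \<and> pp p (P x)}"
  show "J_submodule p \<sigma> J\<nu>"
    unfolding J_submodule_def J\<nu>_def
    by (auto simp: P_pp P_mult pp_mult P_inverse pp_inverse P_\<sigma> aut_eq0[OF a\<sigma>] intro: pp_aut[OF a\<sigma>])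
  show "\<forall>x \<in> J_eps p \<epsilon> t \<inter> J\<nu>. pth_power p x"
    unfolding J\<nu>_def using P_eps peq_sym peq_pp by blast
  show "\<forall>x. x \<noteq> 0 \<longrightarrow> (\<exists>u \<in> J_eps p \<epsilon> t. \<exists>v \<in> J\<nu>. x = u * v)"
  proof (intro allI impI)
    fix x :: 'a assume x: "x \<noteq> 0"
    have u: "P x \<in> J_eps p \<epsilon> t" by (rule P_in_eps[OF x])
    have "peq p (P (P x)) (P x)" by (rule P_eps[OF u])
    then have "pp p (P x / P (P x))" using peq_sym unfolding peq_def by blast
    then have "x / P x \<in> J\<nu>" using x P_nz[OF x] by (simp add: J\<nu>_def P_div)
    moreover have "x = P x * (x / P x)" using P_nz[OF x] by simp
    ultimately show "\<exists>u \<in> J_eps p \<epsilon> t. \<exists>v \<in> J\<nu>. x = u * v" using u by blast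
  qed
  show "\<forall>x \<in> J\<nu> \<inter> J_ker p \<sigma> (p - 1). index_e p \<sigma> \<xi> x = 0"
  proof
    fix x assume "x \<in> J\<nu> \<inter> J_ker p \<sigma> (p - 1)"
    then have xx: "x \<in> J_ker p \<sigma> (p - 1)" "x \<in> J\<nu>" by auto
    have x: "x \<noteq> 0" "pp p (N x)" "pp p (P x)" using K_iff[THEN iffD1, OF xx(1)] xx(2) by (auto simp: J\<nu>_def)
    obtain c where c: "has_index x c" using index_exists[OF x(2)] by blast
    have "has_index (P x) c" by (rule has_index_P[OF c])
    moreover obtain w where w: "P x = w ^ p" using x(3) by (auto simp: pth_power_def)
    ultimately have "index_e p \<sigma> \<xi> (P x) = c" using index_unique P_nz[OF x(1)] by blast
    moreover have "index_e p \<sigma> \<xi> (P x) = 0" using index_unique[OF P_nz[OF x(1)]] has_index_pp w by metis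
    ultimately show "index_e p \<sigma> \<xi> x = 0" using index_unique[OF x(1) c] by simp
  qed
  show "\<forall>x \<in> J_ker p \<sigma> (p - 1). \<forall>u \<in> J_eps p \<epsilon> t. \<forall>v \<in> J\<nu>.
          pth_power p (x / (u * v)) \<longrightarrow>
            u \<in> J_ker p \<sigma> (p - 1) \<and> index_e p \<sigma> \<xi> u = index_e p \<sigma> \<xi> x"
  proof (intro ballI impI)
    fix x u v assume xK: "x \<in> J_ker p \<sigma> (p - 1)" and uE: "u \<in> J_eps p \<epsilon> t" and vN: "v \<in> J\<nu>"
      and q: "pth_power p (x / (u * v))"
    have x: "x \<noteq> 0" "pp p (N x)" using K_iff[THEN iffD1, OF xK] by auto
    have u0: "u \<noteq> 0" using uE by (simp add: J_eps_def)
    have v: "v \<noteq> 0" "pp p (P v)" using vN by (auto simp: J\<nu>_def)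
    define qq where "qq = x / (u * v)"
    have qq0: "qq \<noteq> 0" using x u0 v by (simp add: qq_def)
    have ue: "u = x / (v * qq)" using x u0 v by (simp add: qq_def field_simps)
    have "P u / P x = inverse (P v * P qq)" using P_nz[OF x(1)]
      by (simp add: ue P_div P_mult field_simps)
    moreover have "pp p (P qq)" using q P_pp by (simp add: qq_def)
    ultimately have "pp p (P u / P x)" using v(2) by (simp add: pp_inverse pp_mult)
    then have "peq p (P u) (P x)" using P_nz x u0 by (simp add: peq_def)
    then have upx: "peq p u (P x)" using peq_trans peq_sym P_eps[OF uE] by blast
    then obtain r where r: "u / P x = r ^ p" by (auto simp: peq_def pth_power_def)
    have ur: "u = P x * r ^ p" using r P_nz[OF x(1)] by (simp add: field_simps)
    have "pp p (N u)" using N_peq[OF upx] P_K[OF x(2)] peq_pp by blast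
    then have uK: "u \<in> J_ker p \<sigma> (p - 1)" using u0 K_iff[of u] by blast
    obtain c where c: "has_index x c" using index_exists[OF x(2)] by blast
    have "has_index u c" unfolding ur by (intro has_index_mult_pp has_index_P c)
    then have "index_e p \<sigma> \<xi> u = index_e p \<sigma> \<xi> x"
      using index_unique[OF u0] index_unique[OF x(1) c] by simp
    then show "u \<in> J_ker p \<sigma> (p - 1) \<and> index_e p \<sigma> \<xi> u = index_e p \<sigma> \<xi> x" using uK by blast
  qed
qed

end


theorem lemma7:
  fixes p s :: nat and t :: int
    and \<sigma> \<epsilon> :: "'a::field \<Rightarrow> 'a" and \<xi> :: 'a
    and F0 F K0 :: "'a set"
  assumes p_prime: "prime (p::nat)" and p_odd: "odd p"
    and char: "(of_nat p :: 'a) \<noteq> 0"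
    and aut_\<sigma>: "field_aut \<sigma>" and aut_\<epsilon>: "field_aut \<epsilon>"
    and \<sigma>_order: "\<sigma> ^^ p = id" "\<sigma> \<noteq> id"
    and \<epsilon>_order: "s > 0" "\<epsilon> ^^ s = id" "\<forall>k. 0 < k \<and> k < s \<longrightarrow> \<epsilon> ^^ k \<noteq> id"
    and s_coprime: "coprime s p"
    and commute: "\<epsilon> \<circ> \<sigma> = \<sigma> \<circ> \<epsilon>"
    and F0_def: "F0 = {x. \<sigma> x = x \<and> \<epsilon> x = x}"
    and F_def: "F = {x. \<sigma> x = x}"
    and K0_def: "K0 = {x. \<epsilon> x = x}"
    and \<xi>_prim: "\<xi> ^ p = 1" "\<xi> \<noteq> 1"
    and F_gen: "F = gen_field (F0 \<union> {\<xi>})"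
    and K_gen: "gen_field (K0 \<union> {\<xi>}) = UNIV"
    and kummer: "\<exists>\<alpha>. gen_field (F \<union> {\<alpha>}) = UNIV \<and> \<alpha> ^ p \<in> F \<and> \<sigma> \<alpha> = \<xi> * \<alpha>"
    and t_def: "\<epsilon> \<xi> = \<xi> powi t"
  shows "\<exists>J\<nu>. J_submodule p \<sigma> J\<nu>
     \<and> (\<forall>x \<in> J_eps p \<epsilon> t \<inter> J\<nu>. pth_power p x)
     \<and> (\<forall>x. x \<noteq> 0 \<longrightarrow> (\<exists>u \<in> J_eps p \<epsilon> t. \<exists>v \<in> J\<nu>. x = u * v))
     \<and> (\<forall>x \<in> J\<nu> \<inter> J_ker p \<sigma> (p - 1). index_e p \<sigma> \<xi> x = 0)
     \<and> (\<forall>x \<in> J_ker p \<sigma> (p - 1). \<forall>u \<in> J_eps p \<epsilon> t. \<forall>v \<in> J\<nu>.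
          pth_power p (x / (u * v)) \<longrightarrow>
            u \<in> J_ker p \<sigma> (p - 1) \<and> index_e p \<sigma> \<xi> u = index_e p \<sigma> \<xi> x)"
proof -
  have "\<xi> \<in> gen_field (F0 \<union> {\<xi>})" by (auto simp: gen_field_def)
  then have \<sigma>\<xi>: "\<sigma> \<xi> = \<xi>" using F_gen F_def by auto
  interpret k0: kum0 p \<sigma> \<epsilon> \<xi> t s
    by unfold_locales (use p_prime p_odd aut_\<sigma> aut_\<epsilon> \<sigma>_order \<epsilon>_order commute \<xi>_prim \<sigma>\<xi> t_def in auto)
  have ts: "[t ^ s = 1] (mod int p)" by (rule k0.ts)
  define a where "a = t ^ (s - 1)"
  have "t * a = t ^ s" using \<epsilon>_order(1) unfolding a_def by (metis Suc_diff_1 power_Suc)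
  then have ta: "[t * a = 1] (mod int p)" using ts by simp
  have "coprime (int s) (int p)" using s_coprime by simp
  then obtain m where "[int s * m = 1] (mod int p)" using cong_solve_coprime_int by blast
  then have ms: "[m * int s = 1] (mod int p)" by (simp add: mult.commute)
  interpret k: kum p \<sigma> \<epsilon> \<xi> t s m a
    by unfold_locales (rule ms, rule ta)
  show ?thesis by (rule k.main)
qed

end
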